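(* Let $G$ be a torsion-free hyperbolic group. Then every retract of $G$ is malnormal in $G$.
   Context: A subgroup $H\le G$ is a retract of $G$ if there is a homomorphism $\phi:G\to H$ with $\phi(h)=h$ for all $h\in H$. A subgroup $H\le G$ is malnormal if $H\cap gHg^{-1}=\{e\}$ for all $g\in G\setminus H$. *)

theory Defs
  imports "HOL-Algebra.Algebra" "HOL-Analysis.Analysis"
begin

definition word_length :: "('a, 'b) monoid_scheme \<Rightarrow> 'a set \<Rightarrow> 'a \<Rightarrow> nat" where
  "word_length G S g =
     (LEAST n. \<exists>ws. set ws \<subseteq> S \<union> (m_inv G ` S) \<and> length ws = n \<and>
                    foldr (\<lambda>a b. a \<otimes>\<^bsub>G\<^esub> b) ws \<one>\<^bsub>G\<^esub> = g)"

definition word_dist :: "('a, 'b) monoid_scheme \<Rightarrow> 'a set \<Rightarrow> 'a \<Rightarrow> 'a \<Rightarrow> real" where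
  "word_dist G S x y = real (word_length G S (inv\<^bsub>G\<^esub> x \<otimes>\<^bsub>G\<^esub> y))"

definition gromov_product :: "('a, 'b) monoid_scheme \<Rightarrow> 'a set \<Rightarrow> 'a \<Rightarrow> 'a \<Rightarrow> 'a \<Rightarrow> real" where
  "gromov_product G S w x y =
     (word_dist G S w x + word_dist G S w y - word_dist G S x y) / 2"

definition hyperbolic_group :: "('a, 'b) monoid_scheme \<Rightarrow> bool" where
  "hyperbolic_group G \<longleftrightarrow> group G \<and>
     (\<exists>S. finite S \<and> S \<subseteq> carrier G \<and> generate G S = carrier G \<and>
       (\<exists>\<delta>::real. \<forall>w\<in>carrier G. \<forall>x\<in>carrier G. \<forall>y\<in>carrier G. \<forall>z\<in>carrier G.
          gromov_product G S w x z \<ge> min (gromov_product G S w x y) (gromov_product G S w y z) - \<delta>))"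

definition torsion_free :: "('a, 'b) monoid_scheme \<Rightarrow> bool" where
  "torsion_free G \<longleftrightarrow> (\<forall>x\<in>carrier G. \<forall>n::nat. n > 0 \<and> x [^]\<^bsub>G\<^esub> n = \<one>\<^bsub>G\<^esub> \<longrightarrow> x = \<one>\<^bsub>G\<^esub>)"

definition retract :: "'a set \<Rightarrow> ('a, 'b) monoid_scheme \<Rightarrow> bool" where
  "retract H G \<longleftrightarrow> subgroup H G \<and>
     (\<exists>\<phi>. \<phi> \<in> hom G (G\<lparr>carrier := H\<rparr>) \<and> (\<forall>h\<in>H. \<phi> h = h))"

definition malnormal :: "'a set \<Rightarrow> ('a, 'b) monoid_scheme \<Rightarrow> bool" where
  "malnormal H G \<longleftrightarrow> subgroup H G \<and>
     (\<forall>g\<in>carrier G - H. H \<inter> {g \<otimes>\<^bsub>G\<^esub> h \<otimes>\<^bsub>G\<^esub> inv\<^bsub>G\<^esub> g | h. h \<in> H} = {\<one>\<^bsub>G\<^esub>})"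

end

theory Submission
  imports Defs
begin
locale hypg = group G for G :: "('a, 'b) monoid_scheme" (structure) +
  fixes S :: "'a set" and \<delta> :: real
  assumes finS: "finite S" and Ssub: "S \<subseteq> carrier G" and gen: "generate G S = carrier G"
    and dpos: "\<delta> \<ge> 0"
    and four: "\<And>w x y z. w \<in> carrier G \<Longrightarrow> x \<in> carrier G \<Longrightarrow> y \<in> carrier G \<Longrightarrow> z \<in> carrier G \<Longrightarrow>
       gromov_product G S w x z \<ge> min (gromov_product G S w x y) (gromov_product G S w y z) - \<delta>"
begin

abbreviation "AL \<equiv> S \<union> m_inv G ` S"
abbreviation "len \<equiv> word_length G S"
abbreviation "dd \<equiv> word_dist G S"
abbreviation "gp \<equiv> gromov_product G S"
definition wp where "wp ws = foldr (\<lambda>a b. a \<otimes> b) ws \<one>"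

lemma wp_Nil[simp]: "wp [] = \<one>" by (simp add: wp_def)
lemma wp_Cons[simp]: "wp (a # ws) = a \<otimes> wp ws" by (simp add: wp_def)

lemma AL_sub: "AL \<subseteq> carrier G" using Ssub by auto

lemma wp_closed: "set ws \<subseteq> carrier G \<Longrightarrow> wp ws \<in> carrier G"
  by (induction ws) auto

lemma wp_append: "set ws \<subseteq> carrier G \<Longrightarrow> set vs \<subseteq> carrier G \<Longrightarrow> wp (ws @ vs) = wp ws \<otimes> wp vs"
  by (induction ws) (auto simp: wp_closed m_assoc)

lemma wp_inv: "set ws \<subseteq> carrier G \<Longrightarrow> inv (wp ws) = wp (rev (map (m_inv G) ws))"
proof (induction ws)
  case Nil then show ?case by simp
next
  case (Cons a ws)
  then have "inv (wp (a # ws)) = inv (wp ws) \<otimes> inv a" by (simp add: inv_mult_group wp_closed)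
  also have "\<dots> = wp (rev (map (m_inv G) ws)) \<otimes> wp [inv a]" using Cons by simp
  also have "\<dots> = wp (rev (map (m_inv G) ws) @ [inv a])"
    using Cons by (subst wp_append) auto
  also have "\<dots> = wp (rev (map (m_inv G) (a#ws)))" by simp
  finally show ?case .
qed

lemma gen_word: "x \<in> carrier G \<Longrightarrow> \<exists>ws. set ws \<subseteq> AL \<and> wp ws = x"
proof -
  assume "x \<in> carrier G"
  then have "x \<in> generate G S" using gen by simp
  then show ?thesis
  proof (induction rule: generate.induct)
    case one then show ?case by (intro exI[of _ "[]"]) auto
  next
    case (incl h) then show ?case using Ssub by (intro exI[of _ "[h]"]) auto
  next
    case (inv h) then show ?case using Ssub by (intro exI[of _ "[inv h]"]) auto
  next
    case (eng h1 h2)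
    then obtain w1 w2 where "set w1 \<subseteq> AL" "wp w1 = h1" "set w2 \<subseteq> AL" "wp w2 = h2" by blast
    moreover have "set w1 \<subseteq> carrier G" "set w2 \<subseteq> carrier G" using calculation AL_sub by blast+
    ultimately show ?case by (intro exI[of _ "w1 @ w2"]) (auto simp: wp_append)
  qed
qed

lemma len_word: "x \<in> carrier G \<Longrightarrow> \<exists>ws. set ws \<subseteq> AL \<and> length ws = len x \<and> wp ws = x"
proof -
  assume "x \<in> carrier G"
  then obtain ws where "set ws \<subseteq> AL" "wp ws = x" using gen_word by blast
  then have "\<exists>n ws. set ws \<subseteq> AL \<and> length ws = n \<and> wp ws = x" by blast
  then show ?thesis unfolding word_length_def wp_def by (rule LeastI_ex)
qed

lemma len_le: "set ws \<subseteq> AL \<Longrightarrow> len (wp ws) \<le> length ws"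
  unfolding word_length_def wp_def by (rule Least_le) blast

lemma len_mult: assumes "x \<in> carrier G" "y \<in> carrier G" shows "len (x \<otimes> y) \<le> len x + len y"
proof -
  obtain w1 w2 where w: "set w1 \<subseteq> AL" "length w1 = len x" "wp w1 = x"
    "set w2 \<subseteq> AL" "length w2 = len y" "wp w2 = y" using len_word assms by metis
  moreover have "set w1 \<subseteq> carrier G" "set w2 \<subseteq> carrier G" using w AL_sub by blast+
  ultimately have "wp (w1 @ w2) = x \<otimes> y" by (simp add: wp_append)
  moreover have "len (wp (w1 @ w2)) \<le> length (w1 @ w2)" using w by (intro len_le) auto
  ultimately show ?thesis using w by simp
qed

lemma AL_inv: "set ws \<subseteq> AL \<Longrightarrow> set (rev (map (m_inv G) ws)) \<subseteq> AL"
  using Ssub by (auto simp: subset_iff)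

lemma len_inv_le: assumes "x \<in> carrier G" shows "len (inv x) \<le> len x"
proof -
  obtain w where w: "set w \<subseteq> AL" "length w = len x" "wp w = x" using len_word assms by metis
  moreover have "set w \<subseteq> carrier G" using w AL_sub by blast
  ultimately have "inv x = wp (rev (map (m_inv G) w))" using wp_inv by auto
  then show ?thesis using len_le[OF AL_inv[OF w(1)]] w by simp
qed

lemma len_inv[simp]: "x \<in> carrier G \<Longrightarrow> len (inv x) = len x"
  using len_inv_le[of x] len_inv_le[of "inv x"] by simp

lemma len_one[simp]: "len \<one> = 0"
  using len_le[of "[]"] by simp

lemma len_zero: "x \<in> carrier G \<Longrightarrow> len x = 0 \<Longrightarrow> x = \<one>"
  using len_word by fastforce

lemma finite_ball: "finite {x \<in> carrier G. real (len x) \<le> R}"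
proof -
  have "{x \<in> carrier G. real (len x) \<le> R} \<subseteq> wp ` {ws. set ws \<subseteq> AL \<and> length ws \<le> nat \<lceil>R\<rceil>}"
  proof
    fix x assume "x \<in> {x \<in> carrier G. real (len x) \<le> R}"
    then have x: "x \<in> carrier G" "real (len x) \<le> R" by auto
    obtain w where w: "set w \<subseteq> AL" "length w = len x" "wp w = x" using len_word x by metis
    have "length w \<le> nat \<lceil>R\<rceil>" using w x by linarith
    then show "x \<in> wp ` {ws. set ws \<subseteq> AL \<and> length ws \<le> nat \<lceil>R\<rceil>}" using w by auto
  qed
  moreover have "finite {ws. set ws \<subseteq> AL \<and> length ws \<le> nat \<lceil>R\<rceil>}"
    using finS by (intro finite_lists_length_le) auto
  ultimately show ?thesis using finite_subset by blast
qed

lemma geodesic: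
  assumes "x \<in> carrier G"
  shows "\<exists>\<gamma>. (\<forall>i. \<gamma> i \<in> carrier G) \<and> \<gamma> 0 = \<one> \<and> \<gamma> (len x) = x \<and>
     (\<forall>i j. i \<le> j \<longrightarrow> j \<le> len x \<longrightarrow> len (inv (\<gamma> i) \<otimes> \<gamma> j) = j - i)"
proof -
  obtain w where w: "set w \<subseteq> AL" "length w = len x" "wp w = x" using len_word assms by metis
  define \<gamma> where "\<gamma> i = wp (take i w)" for i
  have wc: "set w \<subseteq> carrier G" using w AL_sub by auto
  have gc: "\<gamma> i \<in> carrier G" for i unfolding \<gamma>_def
    using wc by (intro wp_closed) (meson order_trans set_take_subset)
  have mid: "inv (\<gamma> i) \<otimes> \<gamma> j = wp (take (j - i) (drop i w))" if "i \<le> j" for i j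
  proof -
    have "take j w = take i w @ take (j - i) (drop i w)"
      using that by (metis le_add_diff_inverse take_add)
    then have "\<gamma> j = \<gamma> i \<otimes> wp (take (j - i) (drop i w))" unfolding \<gamma>_def
      using wc by (subst wp_append[symmetric]) (auto dest: in_set_takeD in_set_dropD)
    moreover have "wp (take (j - i) (drop i w)) \<in> carrier G"
      using wc by (intro wp_closed) (auto dest: in_set_takeD in_set_dropD)
    ultimately show ?thesis using gc by (simp add: m_assoc[symmetric])
  qed
  have up: "len (inv (\<gamma> i) \<otimes> \<gamma> j) \<le> j - i" if "i \<le> j" "j \<le> len x" for i j
  proof -
    have "len (inv (\<gamma> i) \<otimes> \<gamma> j) \<le> length (take (j - i) (drop i w))"
      unfolding mid[OF that(1)] using w by (intro len_le) (auto dest: in_set_takeD in_set_dropD)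
    then show ?thesis using that w by simp
  qed
  have g0: "\<gamma> 0 = \<one>" unfolding \<gamma>_def by simp
  have gx: "\<gamma> (len x) = x" unfolding \<gamma>_def using w by simp
  have "len (inv (\<gamma> i) \<otimes> \<gamma> j) = j - i" if "i \<le> j" "j \<le> len x" for i j
  proof -
    have "x = \<gamma> i \<otimes> (inv (\<gamma> i) \<otimes> \<gamma> j) \<otimes> (inv (\<gamma> j) \<otimes> x)"
      using gc assms by (simp add: m_assoc[symmetric])
    then have "len x = len (\<gamma> i \<otimes> (inv (\<gamma> i) \<otimes> \<gamma> j) \<otimes> (inv (\<gamma> j) \<otimes> x))"
      by (rule arg_cong)
    moreover have "len (\<gamma> i \<otimes> (inv (\<gamma> i) \<otimes> \<gamma> j) \<otimes> (inv (\<gamma> j) \<otimes> x))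
       \<le> len (\<gamma> i \<otimes> (inv (\<gamma> i) \<otimes> \<gamma> j)) + len (inv (\<gamma> j) \<otimes> x)"
      using gc assms by (intro len_mult) auto
    moreover have "len (\<gamma> i \<otimes> (inv (\<gamma> i) \<otimes> \<gamma> j)) \<le> len (\<gamma> i) + len (inv (\<gamma> i) \<otimes> \<gamma> j)"
      using gc by (intro len_mult) auto
    ultimately have "len x \<le> len (\<gamma> i) + len (inv (\<gamma> i) \<otimes> \<gamma> j) + len (inv (\<gamma> j) \<otimes> x)"
      by linarith
    moreover have "len (\<gamma> i) \<le> i" using up[of 0 i] that g0 gc by simp
    moreover have "len (inv (\<gamma> j) \<otimes> x) \<le> len x - j" using up[of j "len x"] that gx by simp
    ultimately show ?thesis using up[OF that] that by linarith
  qed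
  then show ?thesis using gc g0 gx by blast
qed

end

context hypg begin

lemma canc1[simp]: "y \<in> carrier G \<Longrightarrow> z \<in> carrier G \<Longrightarrow> y \<otimes> (inv y \<otimes> z) = z"
  by (simp add: m_assoc[symmetric])
lemma canc2[simp]: "y \<in> carrier G \<Longrightarrow> z \<in> carrier G \<Longrightarrow> inv y \<otimes> (y \<otimes> z) = z"
  by (simp add: m_assoc[symmetric])

lemma dd_eq: "dd x y = real (len (inv x \<otimes> y))" by (simp add: word_dist_def)
lemma gp_eq: "gp w x y = (dd w x + dd w y - dd x y) / 2" by (simp add: gromov_product_def)

lemma dd_nonneg: "dd x y \<ge> 0" by (simp add: dd_eq)

lemma dd_sym: "x \<in> carrier G \<Longrightarrow> y \<in> carrier G \<Longrightarrow> dd x y = dd y x"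
proof -
  assume xy: "x \<in> carrier G" "y \<in> carrier G"
  then have "inv (inv x \<otimes> y) = inv y \<otimes> x" by (simp add: inv_mult_group)
  then have "len (inv x \<otimes> y) = len (inv y \<otimes> x)" using xy len_inv[of "inv x \<otimes> y"] by simp
  then show ?thesis by (simp add: dd_eq)
qed

lemma dd_tri: "x \<in> carrier G \<Longrightarrow> y \<in> carrier G \<Longrightarrow> z \<in> carrier G \<Longrightarrow> dd x z \<le> dd x y + dd y z"
proof -
  assume xyz: "x \<in> carrier G" "y \<in> carrier G" "z \<in> carrier G"
  then have "inv x \<otimes> z = (inv x \<otimes> y) \<otimes> (inv y \<otimes> z)" by (simp add: m_assoc)
  then have "len (inv x \<otimes> z) \<le> len (inv x \<otimes> y) + len (inv y \<otimes> z)" using xyz len_mult by simp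
  then show ?thesis by (simp add: dd_eq)
qed

lemma dd_self[simp]: "x \<in> carrier G \<Longrightarrow> dd x x = 0" by (simp add: dd_eq)

lemma dd_left: "a \<in> carrier G \<Longrightarrow> x \<in> carrier G \<Longrightarrow> y \<in> carrier G \<Longrightarrow> dd (a \<otimes> x) (a \<otimes> y) = dd x y"
  by (simp add: dd_eq inv_mult_group m_assoc[symmetric]) (simp add: m_assoc)

lemma dd_one: "x \<in> carrier G \<Longrightarrow> dd \<one> x = real (len x)" by (simp add: dd_eq)

lemma gp_sym': "x \<in> carrier G \<Longrightarrow> y \<in> carrier G \<Longrightarrow> gp w x y = gp w y x"
  by (simp add: gp_eq dd_sym)

lemma gp_left: "a \<in> carrier G \<Longrightarrow> w \<in> carrier G \<Longrightarrow> x \<in> carrier G \<Longrightarrow> y \<in> carrier G \<Longrightarrow>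
   gp (a \<otimes> w) (a \<otimes> x) (a \<otimes> y) = gp w x y"
  by (simp add: gp_eq dd_left)

lemma gp_ident: "a \<in> carrier G \<Longrightarrow> b \<in> carrier G \<Longrightarrow> c \<in> carrier G \<Longrightarrow> gp c a b + gp b a c = dd b c"
  using dd_sym[of a b] dd_sym[of c a] dd_sym[of b c] dd_sym[of a c] by (simp add: gp_eq field_simps)

lemma gp_nonneg: "w \<in> carrier G \<Longrightarrow> x \<in> carrier G \<Longrightarrow> y \<in> carrier G \<Longrightarrow> gp w x y \<ge> 0"
  using dd_tri[of x w y] dd_sym[of x w] by (simp add: gp_eq)

lemma gp_le: "w \<in> carrier G \<Longrightarrow> x \<in> carrier G \<Longrightarrow> y \<in> carrier G \<Longrightarrow> gp w x y \<le> dd w x"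
  using dd_tri[of w x y] dd_sym[of x w] dd_tri[of w y x] dd_sym[of x y] by (simp add: gp_eq)

lemma gp_self: "w \<in> carrier G \<Longrightarrow> x \<in> carrier G \<Longrightarrow> gp w x w = 0"
  using dd_sym[of x w] by (simp add: gp_eq)

lemma gp_self1: "w \<in> carrier G \<Longrightarrow> x \<in> carrier G \<Longrightarrow> gp w w x = 0"
  using dd_sym[of x w] by (simp add: gp_eq)

definition TT :: nat where "TT = nat \<lceil>2 * \<delta>\<rceil> + 1"

lemma TT_gt: "real TT > 2 * \<delta>"
proof -
  have "real (nat \<lceil>2 * \<delta>\<rceil>) \<ge> 2 * \<delta>" using dpos by linarith
  then show ?thesis by (simp add: TT_def)
qed

lemma cyc_min:
  assumes g: "g \<in> carrier G" and mn: "\<And>w. w \<in> carrier G \<Longrightarrow> len g \<le> len (inv w \<otimes> g \<otimes> w)"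
    and big: "2 * TT \<le> len g"
  shows "gp g \<one> (g \<otimes> g) < TT"
proof (rule ccontr)
  assume "\<not> gp g \<one> (g \<otimes> g) < TT"
  then have ge: "gp g \<one> (g \<otimes> g) \<ge> TT" by simp
  define p where "p = len g"
  obtain \<gamma> where gam: "\<forall>i. \<gamma> i \<in> carrier G" "\<gamma> 0 = \<one>" "\<gamma> p = g"
    "\<And>i j. i \<le> j \<Longrightarrow> j \<le> p \<Longrightarrow> len (inv (\<gamma> i) \<otimes> \<gamma> j) = j - i"
    using geodesic[OF g] unfolding p_def by blast
  define y where "y = \<gamma> (p - TT)"
  define w where "w = \<gamma> TT"
  define z where "z = g \<otimes> w"
  have yc: "y \<in> carrier G" and wc: "w \<in> carrier G" and zc: "z \<in> carrier G"
    using gam g by (auto simp: y_def w_def z_def)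
  have pT: "2 * TT \<le> p" using big p_def by simp
  have d1: "dd g y = TT"
  proof -
    have "dd y g = real (len (inv (\<gamma> (p - TT)) \<otimes> \<gamma> p))" using gam by (simp add: dd_eq y_def)
    also have "\<dots> = TT" using gam(4)[of "p - TT" p] pT by simp
    finally show ?thesis using dd_sym[OF g yc] by simp
  qed
  have d2: "dd g \<one> = p" using dd_sym[of g \<one>] g by (simp add: dd_one p_def)
  have d3: "dd y \<one> = p - TT"
  proof -
    have "dd \<one> y = real (len (inv (\<gamma> 0) \<otimes> \<gamma> (p - TT)))" using gam yc by (simp add: dd_one y_def)
    also have "\<dots> = p - TT" using gam(4)[of 0 "p - TT"] pT by simp
    finally show ?thesis using dd_sym[OF yc one_closed] by simp
  qed
  have "dd g z = dd (g \<otimes> \<one>) (g \<otimes> w)" using g by (simp add: z_def)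
  also have "\<dots> = dd \<one> w" by (rule dd_left[OF g one_closed wc])
  also have "\<dots> = real (len (inv (\<gamma> 0) \<otimes> \<gamma> TT))" using gam wc by (simp add: dd_one w_def)
  finally have d4: "dd g z = TT" using gam(4)[of 0 TT] pT by simp
  have "dd z (g \<otimes> g) = dd w g" unfolding z_def using dd_left g wc by simp
  also have "\<dots> = real (len (inv (\<gamma> TT) \<otimes> \<gamma> p))" using gam by (simp add: dd_eq w_def)
  finally have d5: "dd z (g \<otimes> g) = p - TT" using gam(4)[of TT p] pT by simp
  have d6: "dd g (g \<otimes> g) = p" using dd_left[of g \<one> g] g by (simp add: dd_one p_def)
  have gy1: "gp g y \<one> = TT" using d1 d2 d3 pT by (simp add: gp_eq)
  have gz: "gp g (g \<otimes> g) z = TT" using d4 d5 d6 pT dd_sym[OF zc, of "g \<otimes> g"] g by (simp add: gp_eq)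
  have f1: "gp g y z \<ge> min (gp g y \<one>) (gp g \<one> z) - \<delta>" using four g yc zc by simp
  have f2: "gp g \<one> z \<ge> min (gp g \<one> (g \<otimes> g)) (gp g (g \<otimes> g) z) - \<delta>" using four g zc by simp
  have "gp g y z \<ge> TT - 2 * \<delta>" using f1 f2 gy1 gz ge dpos by linarith
  then have dyz: "dd y z \<le> 4 * \<delta>" using d1 d4 by (simp add: gp_eq)
  have eq: "inv w \<otimes> g \<otimes> w = (inv w \<otimes> y) \<otimes> (inv y \<otimes> z)"
    using yc wc g by (simp add: z_def m_assoc)
  have "len (inv w \<otimes> g \<otimes> w) \<le> len (inv w \<otimes> y) + len (inv y \<otimes> z)"
    unfolding eq using yc wc zc by (intro len_mult) auto
  moreover have "len (inv w \<otimes> y) = p - TT - TT" using gam(4)[of TT "p - TT"] pT by (simp add: w_def y_def)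
  moreover have "real (len (inv y \<otimes> z)) \<le> 4 * \<delta>" using dyz by (simp add: dd_eq)
  ultimately have "real (len (inv w \<otimes> g \<otimes> w)) \<le> real (p - TT - TT) + 4 * \<delta>" by linarith
  moreover have "len g \<le> len (inv w \<otimes> g \<otimes> w)" using mn wc by simp
  ultimately show False using TT_gt pT p_def by linarith
qed

end

context hypg begin

lemma chainQ:
  assumes xc: "\<And>i. x i \<in> carrier G"
    and step: "\<And>i. i < N \<Longrightarrow> dd (x i) (x (Suc i)) = p"
    and loc: "\<And>i. Suc (Suc i) \<le> N \<Longrightarrow> gp (x (Suc i)) (x i) (x (Suc (Suc i))) \<le> \<tau>"
    and tpos: "\<tau> \<ge> 0" and big: "p > 2 * \<tau> + 2 * \<delta>"
  shows "n < N \<Longrightarrow> gp (x n) (x 0) (x (Suc n)) \<le> \<tau> + \<delta>"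
proof (induction n)
  case 0
  then show ?case using gp_self1[OF xc xc] tpos dpos by simp
next
  case (Suc n)
  then have IH: "gp (x n) (x 0) (x (Suc n)) \<le> \<tau> + \<delta>" by simp
  have f: "gp (x (Suc n)) (x n) (x (Suc (Suc n))) \<ge>
      min (gp (x (Suc n)) (x n) (x 0)) (gp (x (Suc n)) (x 0) (x (Suc (Suc n)))) - \<delta>"
    using four xc by blast
  have l: "gp (x (Suc n)) (x n) (x (Suc (Suc n))) \<le> \<tau>" using loc Suc by simp
  have id: "gp (x (Suc n)) (x 0) (x n) + gp (x n) (x 0) (x (Suc n)) = dd (x n) (x (Suc n))"
    using gp_ident xc by blast
  have "dd (x n) (x (Suc n)) = p" using step Suc by simp
  moreover have "gp (x (Suc n)) (x n) (x 0) = gp (x (Suc n)) (x 0) (x n)" using gp_sym' xc by blast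
  ultimately have "gp (x (Suc n)) (x n) (x 0) \<ge> p - \<tau> - \<delta>" using id IH by linarith
  then show ?case using f l big by linarith
qed

lemma chainLen:
  assumes xc: "\<And>i. x i \<in> carrier G"
    and step: "\<And>i. i < N \<Longrightarrow> dd (x i) (x (Suc i)) = p"
    and loc: "\<And>i. Suc (Suc i) \<le> N \<Longrightarrow> gp (x (Suc i)) (x i) (x (Suc (Suc i))) \<le> \<tau>"
    and tpos: "\<tau> \<ge> 0" and big: "p > 2 * \<tau> + 2 * \<delta>"
  shows "n \<le> N \<Longrightarrow> dd (x 0) (x n) \<ge> n * (p - 2 * \<tau> - 2 * \<delta>)"
proof (induction n)
  case 0
  then show ?case using xc by simp
next
  case (Suc n)
  have Q: "gp (x n) (x 0) (x (Suc n)) \<le> \<tau> + \<delta>"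
    using chainQ[of x N p \<tau>, OF xc step loc tpos big] Suc by simp
  have "gp (x n) (x 0) (x (Suc n)) = (dd (x n) (x 0) + dd (x n) (x (Suc n)) - dd (x 0) (x (Suc n))) / 2"
    by (simp add: gp_eq)
  moreover have "dd (x n) (x 0) = dd (x 0) (x n)" using dd_sym xc by blast
  moreover have "dd (x n) (x (Suc n)) = p" using step Suc by simp
  ultimately have "dd (x 0) (x (Suc n)) \<ge> dd (x 0) (x n) + p - 2 * (\<tau> + \<delta>)" using Q by argo
  then show ?case using Suc by (simp add: algebra_simps)
qed

lemma chainProd:
  assumes xc: "\<And>i. x i \<in> carrier G"
    and step: "\<And>i. i < N \<Longrightarrow> dd (x i) (x (Suc i)) = p"
    and loc: "\<And>i. Suc (Suc i) \<le> N \<Longrightarrow> gp (x (Suc i)) (x i) (x (Suc (Suc i))) \<le> \<tau>"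
    and tpos: "\<tau> \<ge> 0" and big: "p > 2 * \<tau> + 3 * \<delta>"
    and jl: "j \<le> l" "l \<le> N"
  shows "gp (x j) (x 0) (x l) \<le> \<tau> + 2 * \<delta>"
proof (cases "j = l")
  case True
  then show ?thesis using gp_self[OF xc xc] tpos dpos by simp
next
  case False
  then have jl': "j < l" using jl by simp
  have big2: "p > 2 * \<tau> + 2 * \<delta>" using big dpos by linarith
  have a: "gp (x j) (x 0) (x (Suc j)) \<le> \<tau> + \<delta>"
    using chainQ[of x N p \<tau>, OF xc step loc tpos big2] jl' jl by simp
  define y where "y i = x (l - i)" for i
  have yc: "\<And>i. y i \<in> carrier G" using xc by (simp add: y_def)
  have ystep: "dd (y i) (y (Suc i)) = p" if "i < l" for i
  proof -
    have "l - i = Suc (l - Suc i)" using that by simp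
    then have "dd (y i) (y (Suc i)) = dd (x (Suc (l - Suc i))) (x (l - Suc i))" by (simp add: y_def)
    also have "\<dots> = dd (x (l - Suc i)) (x (Suc (l - Suc i)))" using dd_sym xc by blast
    also have "\<dots> = p" using step that jl by simp
    finally show ?thesis .
  qed
  have yloc: "gp (y (Suc i)) (y i) (y (Suc (Suc i))) \<le> \<tau>" if "Suc (Suc i) \<le> l" for i
  proof -
    define m where "m = l - Suc (Suc i)"
    have e: "l - i = Suc (Suc m)" "l - Suc i = Suc m" "l - Suc (Suc i) = m" using that by (auto simp: m_def)
    have "gp (y (Suc i)) (y i) (y (Suc (Suc i))) = gp (x (Suc m)) (x (Suc (Suc m))) (x m)"
      by (simp add: y_def e)
    also have "\<dots> = gp (x (Suc m)) (x m) (x (Suc (Suc m)))" using gp_sym' xc by blast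
    also have "\<dots> \<le> \<tau>" using loc that jl e by simp
    finally show ?thesis .
  qed
  have b0: "gp (y (l - Suc j)) (y 0) (y (Suc (l - Suc j))) \<le> \<tau> + \<delta>"
    using chainQ[of y l p \<tau>, OF yc ystep yloc tpos big2] jl' by simp
  have "y (l - Suc j) = x (Suc j)" "y 0 = x l" "y (Suc (l - Suc j)) = x j" using jl' by (auto simp: y_def Suc_diff_Suc)
  then have b: "gp (x (Suc j)) (x l) (x j) \<le> \<tau> + \<delta>" using b0 by simp
  have f: "gp (x j) (x 0) (x (Suc j)) \<ge> min (gp (x j) (x 0) (x l)) (gp (x j) (x l) (x (Suc j))) - \<delta>"
    using four xc by blast
  have id: "gp (x j) (x l) (x (Suc j)) + gp (x (Suc j)) (x l) (x j) = dd (x (Suc j)) (x j)"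
    using gp_ident xc by blast
  have "dd (x (Suc j)) (x j) = p" using step jl' jl dd_sym xc by (metis less_le_trans)
  then have "gp (x j) (x l) (x (Suc j)) \<ge> p - \<tau> - \<delta>" using id b by linarith
  then show ?thesis using a f big by linarith
qed

lemma nearpt:
  assumes yc: "\<And>i. y i \<in> carrier G" and zc: "z \<in> carrier G"
    and step: "\<And>i. i < N \<Longrightarrow> dd (y i) (y (Suc i)) \<le> p"
    and prod: "\<And>j. j \<le> N \<Longrightarrow> gp (y j) (y 0) (y N) \<le> C"
    and Cpos: "C \<ge> 0" and ppos: "p \<ge> 0" and zp: "gp z (y 0) (y N) \<le> C'"
  shows "\<exists>j\<le>N. dd z (y j) \<le> C' + p + 2 * C + 2 * \<delta>"
proof -
  define A where "A = y 0"
  define B where "B = y N"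
  have Ac: "A \<in> carrier G" and Bc: "B \<in> carrier G" using yc by (auto simp: A_def B_def)
  define s where "s = gp A z B"
  define J where "J = {j. j \<le> N \<and> dd A (y j) \<le> s}"
  have s0: "s \<ge> 0" using gp_nonneg Ac zc Bc by (simp add: s_def)
  have "0 \<in> J" using s0 Ac by (simp add: J_def A_def)
  have fJ: "finite J" by (simp add: J_def)
  define j where "j = Max J"
  have jJ: "j \<in> J" using fJ \<open>0 \<in> J\<close> by (simp add: j_def) (metis Max_in empty_iff)
  then have jN: "j \<le> N" and js: "dd A (y j) \<le> s" by (auto simp: J_def)
  have jlow: "dd A (y j) \<ge> s - p"
  proof (cases "j = N")
    case True
    have "s \<le> dd B A" unfolding s_def using gp_le[OF Ac zc Bc] gp_sym'[OF zc Bc, of A]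
      gp_le[OF Ac Bc zc] by (simp add: dd_sym[OF Ac Bc])
    then have "s \<le> dd A (y j)" using True dd_sym[OF Ac Bc] by (simp add: B_def)
    then show ?thesis using ppos by linarith
  next
    case False
    then have "Suc j \<le> N" using jN by simp
    moreover have "Suc j \<notin> J"
    proof
      assume "Suc j \<in> J"
      then have "Suc j \<le> j" unfolding j_def using Max_ge[OF fJ] by blast
      then show False by simp
    qed
    ultimately have "dd A (y (Suc j)) > s" by (simp add: J_def)
    moreover have "dd A (y (Suc j)) \<le> dd A (y j) + dd (y j) (y (Suc j))" using dd_tri Ac yc by blast
    moreover have "dd (y j) (y (Suc j)) \<le> p" using step \<open>Suc j \<le> N\<close> by simp
    ultimately show ?thesis by linarith
  qed
  have id1: "gp A (y j) B + gp (y j) A B = dd A (y j)"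
    using gp_ident[of B "y j" A] Ac Bc yc gp_sym'[of B "y j"] gp_sym'[of A B] dd_sym[of A "y j"] by simp
  have "gp (y j) A B \<le> C" using prod jN by (simp add: A_def B_def)
  then have g1: "gp A (y j) B \<ge> dd A (y j) - C" using id1 by linarith
  have f: "gp A z (y j) \<ge> min (gp A z B) (gp A B (y j)) - \<delta>" using four Ac zc Bc yc by blast
  have "gp A B (y j) = gp A (y j) B" using gp_sym' Bc yc by blast
  then have g2: "gp A z (y j) \<ge> dd A (y j) - C - \<delta>" using f g1 js Cpos unfolding s_def by linarith
  have "gp A z (y j) = (dd A z + dd A (y j) - dd z (y j)) / 2" by (simp add: gp_eq)
  then have g3: "dd z (y j) \<le> dd A z - dd A (y j) + 2 * C + 2 * \<delta>" using g2 by argo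
  have id2: "gp A B z + gp z B A = dd z A" using gp_ident Ac Bc zc by blast
  have "gp z B A = gp z A B" "gp A B z = s" "dd z A = dd A z" using gp_sym' dd_sym Ac Bc zc
    by (auto simp: s_def)
  then have "dd A z - s \<le> C'" using id2 zp by (simp add: A_def B_def)
  then have "dd z (y j) \<le> C' + p + 2 * C + 2 * \<delta>" using g3 jlow by linarith
  then show ?thesis using jN by blast
qed

end

context hypg begin

lemma pow_assoc: "g \<in> carrier G \<Longrightarrow> x \<in> carrier G \<Longrightarrow> g [^] (k::nat) \<otimes> (g [^] (j::nat) \<otimes> x) = g [^] (k + j) \<otimes> x"
  by (simp add: m_assoc[symmetric] nat_pow_mult)

lemma midpt:
  assumes Oc: "Ob \<subseteq> carrier G" and c1: "c1 \<in> carrier G" and c2: "c2 \<in> carrier G"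
    and b1: "\<And>q. q \<in> Ob \<Longrightarrow> dd c1 q \<le> R" and b2: "\<And>q. q \<in> Ob \<Longrightarrow> dd c2 q \<le> R"
    and rad: "\<And>c. c \<in> carrier G \<Longrightarrow> \<exists>q\<in>Ob. r \<le> dd c q"
  shows "dd c1 c2 \<le> 2 * (R - r) + 4 * \<delta> + 1"
proof -
  define e where "e = inv c1 \<otimes> c2"
  have ec: "e \<in> carrier G" using c1 c2 by (simp add: e_def)
  define a where "a = len e"
  obtain \<gamma> where gam: "\<forall>i. \<gamma> i \<in> carrier G" "\<gamma> 0 = \<one>" "\<gamma> a = e"
    "\<And>i j. i \<le> j \<Longrightarrow> j \<le> a \<Longrightarrow> len (inv (\<gamma> i) \<otimes> \<gamma> j) = j - i"
    using geodesic[OF ec] unfolding a_def by blast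
  define h where "h = a div 2"
  define mp where "mp = c1 \<otimes> \<gamma> h"
  have mpc: "mp \<in> carrier G" using c1 gam by (simp add: mp_def)
  have ha: "h \<le> a" "h \<le> a - h" "a \<le> 2 * h + 1" by (auto simp: h_def)
  have "dd (c1 \<otimes> \<one>) (c1 \<otimes> \<gamma> h) = dd \<one> (\<gamma> h)" using gam by (intro dd_left c1) auto
  then have "dd c1 mp = dd \<one> (\<gamma> h)" using c1 by (simp add: mp_def)
  also have "\<dots> = real (len (inv (\<gamma> 0) \<otimes> \<gamma> h))" using gam by (simp add: dd_eq)
  finally have d1: "dd c1 mp = h" using gam(4)[of 0 h] ha by simp
  have "c2 = c1 \<otimes> \<gamma> a" using gam c1 c2 by (simp add: e_def)
  then have "dd mp c2 = dd (c1 \<otimes> \<gamma> h) (c1 \<otimes> \<gamma> a)" by (simp add: mp_def)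
  also have "\<dots> = dd (\<gamma> h) (\<gamma> a)" using gam by (intro dd_left c1) auto
  finally have d2: "dd mp c2 = a - h" using gam(4)[of h a] ha by (simp add: dd_eq)
  have d3: "dd c1 c2 = a" by (simp add: dd_eq a_def e_def)
  have g0: "gp mp c1 c2 = 0" using d1 d2 d3 dd_sym[OF mpc c1] ha by (simp add: gp_eq)
  obtain q where oO: "q \<in> Ob" and ro: "r \<le> dd mp q" using rad mpc by blast
  have oc: "q \<in> carrier G" using oO Oc by auto
  have f: "gp mp c1 c2 \<ge> min (gp mp c1 q) (gp mp q c2) - \<delta>" using four mpc c1 c2 oc by blast
  have "dd mp q \<le> 2 * \<delta> + R - h"
  proof (cases "gp mp c1 q \<le> \<delta>")
    case True
    then have "(dd mp c1 + dd mp q - dd c1 q) / 2 \<le> \<delta>" by (simp add: gp_eq)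
    then show ?thesis using d1 dd_sym[OF mpc c1] b1[OF oO] by argo
  next
    case False
    then have "gp mp q c2 \<le> \<delta>" using f g0 by linarith
    then have "(dd mp q + dd mp c2 - dd q c2) / 2 \<le> \<delta>" by (simp add: gp_eq)
    moreover have "real (a - h) \<ge> real h" using ha by simp
    ultimately show ?thesis using d2 dd_sym[OF oc c2] b2[OF oO] by argo
  qed
  then have "r \<le> 2 * \<delta> + R - h" using ro by linarith
  moreover have "real a \<le> 2 * real h + 1" using ha by linarith
  ultimately show ?thesis using d3 by argo
qed

lemma qcenter:
  assumes g: "g \<in> carrier G" and x: "x \<in> carrier G" and m: "0 < m"
    and L: "real (len (inv x \<otimes> (g [^] (m::nat) \<otimes> x))) \<le> L"
    and cardB: "card {y \<in> carrier G. real (len y) \<le> 2 * L + 4 * \<delta> + 1} \<le> m"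
  shows "\<exists>k1 k2::nat. k1 < k2 \<and> g [^] k1 = g [^] k2"
proof -
  define Ob where "Ob = (\<lambda>i. g [^] i \<otimes> x) ` {..<m}"
  have Oc: "Ob \<subseteq> carrier G" using g x by (auto simp: Ob_def)
  have Of: "finite Ob" by (simp add: Ob_def)
  have "g [^] (0::nat) \<otimes> x \<in> Ob" using m unfolding Ob_def by (intro imageI) simp
  then have One: "Ob \<noteq> {}" by auto
  define \<rho> where "\<rho> c = Max ((\<lambda>q. len (inv c \<otimes> q)) ` Ob)" for c
  have rho_ge: "len (inv c \<otimes> q) \<le> \<rho> c" if "q \<in> Ob" for c q
    unfolding \<rho>_def using Of that by (intro Max_ge) auto
  have rho_in: "\<exists>q\<in>Ob. \<rho> c = len (inv c \<otimes> q)" for c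
  proof -
    have "\<rho> c \<in> (\<lambda>q. len (inv c \<otimes> q)) ` Ob" unfolding \<rho>_def using Of One by (intro Max_in) auto
    then show ?thesis by auto
  qed
  obtain c where cc: "c \<in> carrier G" and cmin: "\<And>c'. c' \<in> carrier G \<Longrightarrow> \<rho> c \<le> \<rho> c'"
    using ex_has_least_nat[of "\<lambda>c. c \<in> carrier G" \<one> \<rho>] by auto
  define r0 where "r0 = \<rho> c"
  have rad: "\<exists>q\<in>Ob. real r0 \<le> dd c' q" if "c' \<in> carrier G" for c'
  proof -
    obtain q where "q \<in> Ob" "\<rho> c' = len (inv c' \<otimes> q)" using rho_in by blast
    then show ?thesis using cmin[OF that] by (auto simp: r0_def dd_eq)
  qed
  have b1: "dd c q \<le> real r0" if "q \<in> Ob" for q using rho_ge[OF that, of c] by (simp add: r0_def dd_eq)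
  have b2: "dd (g [^] k \<otimes> c) q \<le> real r0 + L" if qO: "q \<in> Ob" and km: "k \<le> m" for q k
  proof -
    obtain i where i: "i < m" "q = g [^] i \<otimes> x" using qO by (auto simp: Ob_def)
    show ?thesis
    proof (cases "k \<le> i")
      case True
      have q': "g [^] (i - k) \<otimes> x \<in> Ob" using i by (auto simp: Ob_def)
      have "q = g [^] k \<otimes> (g [^] (i - k) \<otimes> x)" using i True pow_assoc g x by simp
      then have "dd (g [^] k \<otimes> c) q = dd c (g [^] (i - k) \<otimes> x)" using dd_left g x cc by simp
      also have "\<dots> \<le> r0" using b1 q' by simp
      finally show ?thesis using L dd_nonneg[of x] by (smt (verit) of_nat_0_le_iff)
    next
      case False
      define q' where "q' = g [^] (i + m - k) \<otimes> x"
      have q'O: "q' \<in> Ob" using i False unfolding q'_def Ob_def by (intro imageI) auto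
      have q'c: "q' \<in> carrier G" using g x by (simp add: q'_def)
      have e1: "g [^] k \<otimes> q' = g [^] i \<otimes> (g [^] m \<otimes> x)"
        using pow_assoc g x i False km by (simp add: q'_def)
      have "dd (g [^] k \<otimes> c) q \<le> dd (g [^] k \<otimes> c) (g [^] k \<otimes> q') + dd (g [^] k \<otimes> q') q"
        using dd_tri g cc q'c i x by simp
      also have "dd (g [^] k \<otimes> c) (g [^] k \<otimes> q') = dd c q'" using dd_left g cc q'c by simp
      also have "dd (g [^] k \<otimes> q') q = dd (g [^] i \<otimes> (g [^] m \<otimes> x)) (g [^] i \<otimes> x)" using e1 i by simp
      also have "\<dots> = dd (g [^] m \<otimes> x) x" using dd_left g x by simp
      also have "\<dots> = dd x (g [^] m \<otimes> x)" using dd_sym g x by simp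
      also have "\<dots> \<le> L" using L by (simp add: dd_eq)
      finally show ?thesis using b1[OF q'O] by linarith
    qed
  qed
  have L0: "L \<ge> 0" using L by (smt (verit) of_nat_0_le_iff)
  have b1': "dd c q \<le> real r0 + L" if "q \<in> Ob" for q using b1[OF that] L0 by linarith
  define Bl where "Bl = {y \<in> carrier G. real (len y) \<le> 2 * L + 4 * \<delta> + 1}"
  define f where "f k = inv c \<otimes> (g [^] k \<otimes> c)" for k :: nat
  have fB: "f ` {..m} \<subseteq> Bl"
  proof
    fix y assume "y \<in> f ` {..m}"
    then obtain k where k: "k \<le> m" "y = f k" by auto
    have "dd c (g [^] k \<otimes> c) \<le> 2 * (real r0 + L - real r0) + 4 * \<delta> + 1"
      using midpt[OF Oc cc _ b1' b2[OF _ k(1)] rad] g cc by simp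
    then show "y \<in> Bl" using k g cc by (simp add: Bl_def f_def dd_eq)
  qed
  have "\<not> inj_on f {..m}"
  proof
    assume "inj_on f {..m}"
    then have "card {..m} \<le> card Bl" using fB finite_ball unfolding Bl_def by (intro card_inj_on_le) auto
    then show False using cardB by (simp add: Bl_def)
  qed
  then obtain k1 k2 where k: "k1 \<noteq> k2" "f k1 = f k2" unfolding inj_on_def by auto
  then have "g [^] k1 = g [^] k2" using g cc by (simp add: f_def)
  then show ?thesis using k(1) by (metis linorder_neqE_nat)
qed

end

context hypg begin

lemma comm_pow: "a \<in> carrier G \<Longrightarrow> c \<in> carrier G \<Longrightarrow> a \<otimes> c = c \<otimes> a \<Longrightarrow> a [^] (n::nat) \<otimes> c = c \<otimes> a [^] n"
proof (induction n)
  case 0 then show ?case by simp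
next
  case (Suc n)
  have ih: "a [^] n \<otimes> c = c \<otimes> a [^] n" using Suc by blast
  have ac: "a \<in> carrier G" "c \<in> carrier G" "a \<otimes> c = c \<otimes> a" using Suc.prems by auto
  have "a [^] Suc n \<otimes> c = a [^] n \<otimes> (a \<otimes> c)" using ac(1,2) by (simp add: m_assoc)
  also have "\<dots> = a [^] n \<otimes> (c \<otimes> a)" by (subst ac(3)) (rule refl)
  also have "\<dots> = (a [^] n \<otimes> c) \<otimes> a" using ac(1,2) by (intro m_assoc[symmetric]) auto
  also have "\<dots> = (c \<otimes> a [^] n) \<otimes> a" by (simp only: ih)
  also have "\<dots> = c \<otimes> a [^] Suc n" using ac(1,2) by (simp add: m_assoc)
  finally show ?case .
qed

lemma comm_pow2: "a \<in> carrier G \<Longrightarrow> c \<in> carrier G \<Longrightarrow> a \<otimes> c = c \<otimes> a \<Longrightarrow>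
   a [^] (n::nat) \<otimes> c [^] (k::nat) = c [^] k \<otimes> a [^] n"
proof -
  assume ac: "a \<in> carrier G" "c \<in> carrier G" "a \<otimes> c = c \<otimes> a"
  then have "c \<otimes> a [^] n = a [^] n \<otimes> c" using comm_pow by simp
  then have "c [^] k \<otimes> a [^] n = a [^] n \<otimes> c [^] k" using comm_pow[of c "a [^] n" k] ac by simp
  then show ?thesis by simp
qed

lemma tf_pow:
  assumes tf: "\<forall>x\<in>carrier G. \<forall>n::nat. 0 < n \<and> x [^] n = \<one> \<longrightarrow> x = \<one>"
    and x: "x \<in> carrier G" and ne: "a \<noteq> b" and eq: "x [^] (a::nat) = x [^] (b::nat)"
  shows "x = \<one>"
proof -
  have *: "x = \<one>" if "a' < b'" "x [^] (a'::nat) = x [^] (b'::nat)" for a' b'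
  proof -
    have "x [^] a' \<otimes> x [^] (b' - a') = x [^] b'" using x that(1) by (simp add: nat_pow_mult)
    then have "x [^] a' \<otimes> x [^] (b' - a') = x [^] a' \<otimes> \<one>" using that x by simp
    then have "x [^] (b' - a') = \<one>" using x by (metis l_cancel nat_pow_closed one_closed)
    moreover have "0 < b' - a' \<and> x [^] (b' - a') = \<one> \<longrightarrow> x = \<one>" using tf x by blast
    ultimately show ?thesis using that(1) by simp
  qed
  show ?thesis using ne eq * by (metis linorder_neqE_nat)
qed

definition L0 :: nat where "L0 = 2 * TT + nat \<lceil>3 * \<delta>\<rceil> + 1"

lemma L0_gt: "real L0 > 2 * real TT + 3 * \<delta>"
proof -
  have "real (nat \<lceil>3 * \<delta>\<rceil>) \<ge> 3 * \<delta>" using dpos by linarith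
  then show ?thesis by (simp add: L0_def)
qed

lemma main_contra:
  assumes hc: "h \<in> carrier G" and kc: "k \<in> carrier G" and comm: "h \<otimes> k = k \<otimes> h"
    and h1: "h \<noteq> \<one>" and k1: "k \<noteq> \<one>"
    and tf: "\<forall>x\<in>carrier G. \<forall>n::nat. 0 < n \<and> x [^] n = \<one> \<longrightarrow> x = \<one>"
    and rc: "\<And>x. x \<in> carrier G \<Longrightarrow> r x \<in> carrier G"
    and rm: "\<And>x y. x \<in> carrier G \<Longrightarrow> y \<in> carrier G \<Longrightarrow> r (x \<otimes> y) = r x \<otimes> r y"
    and rh: "r h = h" and rk: "r k = \<one>"
  shows False
proof -
  have r1: "r \<one> = \<one>"
  proof -
    have "r \<one> \<otimes> r \<one> = r \<one>" using rm[of \<one> \<one>] by simp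
    then show ?thesis using rc[of \<one>] by simp
  qed
  have rpow: "r (x [^] (n::nat)) = r x [^] n" if "x \<in> carrier G" for x n
    using that by (induction n) (simp_all add: r1 rm rc)
  have rinv: "r (inv x) = inv (r x)" if "x \<in> carrier G" for x
  proof -
    have "r (inv x) \<otimes> r x = \<one>" using rm[of "inv x" x] that r1 by simp
    then show ?thesis using that rc by (simp add: inv_equality)
  qed
  define Bl0 where "Bl0 = {y \<in> carrier G. real (len y) \<le> 2 * real L0 + 4 * \<delta> + 1}"
  define m where "m = card Bl0"
  have "\<one> \<in> Bl0" using dpos by (simp add: Bl0_def)
  then have m0: "0 < m" using finite_ball unfolding m_def Bl0_def by (metis card_gt_0_iff empty_iff)
  have A: "len (inv x \<otimes> (h [^] m \<otimes> x)) > L0" if xc: "x \<in> carrier G" for x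
  proof (rule ccontr)
    assume "\<not> len (inv x \<otimes> (h [^] m \<otimes> x)) > L0"
    then have "real (len (inv x \<otimes> (h [^] m \<otimes> x))) \<le> real L0" by simp
    then obtain k1 k2 :: nat where "k1 < k2" "h [^] k1 = h [^] k2"
      using qcenter[OF hc xc m0, of "real L0"] by (auto simp: m_def Bl0_def)
    then have "h = \<one>" using tf_pow[OF tf hc, of k1 k2] by (metis less_irrefl)
    then show False using h1 by simp
  qed
  define g0 where "g0 = h [^] m"
  have g0c: "g0 \<in> carrier G" using hc by (simp add: g0_def)
  obtain u where uc: "u \<in> carrier G" and umin: "\<And>u'. u' \<in> carrier G \<Longrightarrow>
      len (inv u \<otimes> (g0 \<otimes> u)) \<le> len (inv u' \<otimes> (g0 \<otimes> u'))"
    using ex_has_least_nat[of "\<lambda>u. u \<in> carrier G" \<one> "\<lambda>u. len (inv u \<otimes> (g0 \<otimes> u))"] by auto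
  define g where "g = inv u \<otimes> (g0 \<otimes> u)"
  have gc: "g \<in> carrier G" using uc g0c by (simp add: g_def)
  define p where "p = len g"
  have pL: "p > L0" using A[OF uc] by (simp add: p_def g_def g0_def)
  have mn: "len g \<le> len (inv w \<otimes> g \<otimes> w)" if wc: "w \<in> carrier G" for w
  proof -
    have "inv w \<otimes> g \<otimes> w = inv (u \<otimes> w) \<otimes> (g0 \<otimes> (u \<otimes> w))"
      using uc wc g0c by (simp add: g_def inv_mult_group m_assoc)
    then show ?thesis using umin[of "u \<otimes> w"] uc wc by (simp add: g_def)
  qed
  have pT: "2 * TT \<le> len g" using pL by (simp add: L0_def p_def)
  have tloc: "gp g \<one> (g \<otimes> g) < TT" using cyc_min[OF gc mn pT] by simp
  have gu: "g0 \<otimes> u = u \<otimes> g" using uc g0c by (simp add: g_def)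
  have ggu: "g0 \<otimes> (g0 \<otimes> u) = u \<otimes> (g \<otimes> g)"
    using gu uc g0c gc by (simp add: m_assoc[symmetric])
  define x where "x i = g0 [^] i \<otimes> u" for i :: nat
  have xc: "\<And>i. x i \<in> carrier G" using g0c uc by (simp add: x_def)
  have xS: "x (Suc i) = g0 [^] i \<otimes> (g0 \<otimes> u)" for i using g0c uc by (simp add: x_def m_assoc)
  have xSS: "x (Suc (Suc i)) = g0 [^] i \<otimes> (g0 \<otimes> (g0 \<otimes> u))" for i
    using g0c uc by (simp add: x_def m_assoc)
  have x0: "x 0 = u" using uc by (simp add: x_def)
  have step: "dd (x i) (x (Suc i)) = real p" for i
  proof -
    have "dd (x i) (x (Suc i)) = dd u (g0 \<otimes> u)" unfolding xS using g0c uc by (simp add: x_def dd_left)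
    then show ?thesis by (simp add: dd_eq p_def g_def)
  qed
  have loc: "gp (x (Suc i)) (x i) (x (Suc (Suc i))) \<le> real TT" for i
  proof -
    have xi: "x i = g0 [^] i \<otimes> u" by (simp add: x_def)
    have "gp (x (Suc i)) (x i) (x (Suc (Suc i))) = gp (g0 \<otimes> u) u (g0 \<otimes> (g0 \<otimes> u))"
      unfolding xS[of i] xSS[of i] xi using g0c uc by (intro gp_left) auto
    also have "\<dots> = gp (u \<otimes> g) (u \<otimes> \<one>) (u \<otimes> (g \<otimes> g))" using gu ggu uc by simp
    also have "\<dots> = gp g \<one> (g \<otimes> g)" using uc gc by (intro gp_left) auto
    finally show ?thesis using tloc by simp
  qed
  have tpos: "real TT \<ge> 0" by simp
  have big: "real p > 2 * real TT + 3 * \<delta>" using pL L0_gt by linarith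
  have big2: "real p > 2 * real TT + 2 * \<delta>" using big dpos by linarith
  define lam where "lam = real p - 2 * real TT - 2 * \<delta>"
  have lam0: "lam > 0" using big dpos by (simp add: lam_def)
  define C where "C = real TT + 2 * \<delta>"
  have C0: "C \<ge> 0" using dpos by (simp add: C_def)
  define R where "R = (C + 2 * \<delta>) + real p + 2 * C + 2 * \<delta>"
  have commk: "g0 [^] (a::nat) \<otimes> k [^] (b::nat) = k [^] b \<otimes> g0 [^] a" for a b
  proof -
    have "g0 \<otimes> k = k \<otimes> g0" using comm_pow[OF hc kc comm] by (simp add: g0_def)
    then show ?thesis using comm_pow2[OF g0c kc] by simp
  qed
  have B: "\<exists>n j. real (len (inv (x n) \<otimes> (k [^] b \<otimes> x j))) \<le> R" for b :: nat
  proof -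
    define kb where "kb = k [^] b"
    have kbc: "kb \<in> carrier G" using kc by (simp add: kb_def)
    define E where "E = dd (x 0) (kb \<otimes> x 0)"
    obtain n :: nat where n: "E + C + 2 * \<delta> < real n * lam" using ex_less_of_nat_mult[OF lam0] by blast
    define N where "N = n + n"
    define z where "z = x n"
    have zc: "z \<in> carrier G" using xc by (simp add: z_def)
    define y where "y i = kb \<otimes> x i" for i
    have yc: "\<And>i. y i \<in> carrier G" using kbc xc by (simp add: y_def)
    have len1: "dd (x 0) (x n) \<ge> real n * lam"
      using chainLen[of x N "real p" "real TT", OF xc step loc tpos big2, of n] by (simp add: N_def lam_def)
    have dz0: "dd z (x 0) \<ge> real n * lam" using len1 dd_sym xc by (simp add: z_def)
    have xN: "x N = g0 [^] n \<otimes> x n" using g0c uc by (simp add: x_def N_def pow_assoc)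
    have xn: "x n = g0 [^] n \<otimes> x 0" using g0c uc by (simp add: x_def)
    have "dd z (x N) = dd (x 0) (x n)" unfolding z_def using xN xn g0c xc
      by (metis dd_left nat_pow_closed)
    then have dz2: "dd z (x N) \<ge> real n * lam" using len1 by simp
    have E2: "dd (x N) (y N) = E"
    proof -
      have "y N = g0 [^] N \<otimes> (kb \<otimes> u)" unfolding y_def x_def kb_def
        using commk[of N b] g0c kc uc by (simp add: m_assoc[symmetric])
      then have "dd (x N) (y N) = dd u (kb \<otimes> u)" using g0c kbc uc by (simp add: x_def dd_left)
      then show ?thesis by (simp add: E_def x0)
    qed
    have E0: "dd (x 0) (y 0) = E" by (simp add: E_def y_def)
    have p1: "gp z (x 0) (y 0) \<ge> dd z (x 0) - E"
    proof -
      have "dd z (x 0) \<le> dd z (y 0) + dd (y 0) (x 0)" using dd_tri zc xc yc by blast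
      moreover have "dd (y 0) (x 0) = E" using E0 dd_sym xc yc by metis
      moreover have "gp z (x 0) (y 0) = (dd z (x 0) + dd z (y 0) - dd (x 0) (y 0)) / 2" by (simp add: gp_eq)
      ultimately show ?thesis using E0 by argo
    qed
    have p2: "gp z (y N) (x N) \<ge> dd z (x N) - E"
    proof -
      have "dd z (x N) \<le> dd z (y N) + dd (y N) (x N)" using dd_tri zc xc yc by blast
      moreover have "dd (y N) (x N) = E" using E2 dd_sym xc yc by metis
      moreover have "gp z (y N) (x N) = (dd z (y N) + dd z (x N) - dd (y N) (x N)) / 2" by (simp add: gp_eq)
      ultimately show ?thesis by argo
    qed
    have pr: "gp z (x 0) (x N) \<le> C"
      using chainProd[of x N "real p" "real TT" n N, OF xc step loc tpos big] by (simp add: z_def N_def C_def)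
    have f1: "gp z (x 0) (x N) \<ge> min (gp z (x 0) (y 0)) (gp z (y 0) (x N)) - \<delta>" using four zc xc yc by blast
    have f2: "gp z (y 0) (x N) \<ge> min (gp z (y 0) (y N)) (gp z (y N) (x N)) - \<delta>" using four zc xc yc by blast
    have zp: "gp z (y 0) (y N) \<le> C + 2 * \<delta>"
    proof (rule ccontr)
      assume a: "\<not> gp z (y 0) (y N) \<le> C + 2 * \<delta>"
      have "gp z (y N) (x N) > C + 2 * \<delta>" using p2 dz2 n by linarith
      then have "gp z (y 0) (x N) > C + \<delta>" using f2 a by linarith
      moreover have "gp z (x 0) (y 0) > C + 2 * \<delta>" using p1 dz0 n by linarith
      ultimately have "gp z (x 0) (x N) > C" using f1 dpos by linarith
      then show False using pr by simp
    qed
    have ystep: "dd (y i) (y (Suc i)) \<le> real p" for i using step[of i] kbc xc by (simp add: y_def dd_left)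
    have yprod: "gp (y j) (y 0) (y N) \<le> C" if "j \<le> N" for j
    proof -
      have "gp (y j) (y 0) (y N) = gp (x j) (x 0) (x N)" using kbc xc by (simp add: y_def gp_left)
      also have "\<dots> \<le> C" using chainProd[of x N "real p" "real TT" j N, OF xc step loc tpos big] that
        by (simp add: C_def)
      finally show ?thesis .
    qed
    obtain j where "j \<le> N" "dd z (y j) \<le> (C + 2 * \<delta>) + real p + 2 * C + 2 * \<delta>"
      using nearpt[of y z N "real p" C, OF yc zc ystep yprod C0 _ zp] by auto
    then have "real (len (inv (x n) \<otimes> (k [^] b \<otimes> x j))) \<le> R" by (simp add: R_def dd_eq z_def y_def kb_def)
    then show ?thesis by blast
  qed
  have "\<forall>b::nat. \<exists>n. \<exists>j. real (len (inv (x n) \<otimes> (k [^] b \<otimes> x j))) \<le> R" using B by blast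
  then have "\<exists>nf. \<forall>b::nat. \<exists>j. real (len (inv (x (nf b)) \<otimes> (k [^] b \<otimes> x j))) \<le> R" by (rule choice)
  then obtain nf where "\<forall>b::nat. \<exists>j. real (len (inv (x (nf b)) \<otimes> (k [^] b \<otimes> x j))) \<le> R" by blast
  then have "\<exists>jf. \<forall>b::nat. real (len (inv (x (nf b)) \<otimes> (k [^] b \<otimes> x (jf b)))) \<le> R" by (rule choice)
  then obtain jf where nj: "\<And>b::nat. real (len (inv (x (nf b)) \<otimes> (k [^] b \<otimes> x (jf b)))) \<le> R" by blast
  define Bl where "Bl = {y \<in> carrier G. real (len y) \<le> R}"
  define F where "F b = inv (x (nf b)) \<otimes> (k [^] b \<otimes> x (jf b))" for b :: nat
  have FB: "F ` {..card Bl} \<subseteq> Bl" using nj xc kc by (auto simp: F_def Bl_def)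
  have "\<not> inj_on F {..card Bl}"
  proof
    assume "inj_on F {..card Bl}"
    then have "card {..card Bl} \<le> card Bl" using FB finite_ball unfolding Bl_def by (intro card_inj_on_le) auto
    then show False by simp
  qed
  then obtain b1 b2 where bb: "b1 \<noteq> b2" "F b1 = F b2" unfolding inj_on_def by auto
  define P1 where "P1 = g0 [^] nf b1"
  define P2 where "P2 = g0 [^] nf b2"
  define Q1 where "Q1 = g0 [^] jf b1"
  define Q2 where "Q2 = g0 [^] jf b2"
  define K1 where "K1 = k [^] b1"
  define K2 where "K2 = k [^] b2"
  have cs: "P1 \<in> carrier G" "P2 \<in> carrier G" "Q1 \<in> carrier G" "Q2 \<in> carrier G" "K1 \<in> carrier G" "K2 \<in> carrier G"
    using g0c kc by (auto simp: P1_def P2_def Q1_def Q2_def K1_def K2_def)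
  have Fe: "F b = inv u \<otimes> ((inv (g0 [^] nf b) \<otimes> (k [^] b \<otimes> g0 [^] jf b)) \<otimes> u)" for b
    using g0c kc uc by (simp add: F_def x_def inv_mult_group m_assoc)
  have e1: "inv P1 \<otimes> (K1 \<otimes> Q1) = inv P2 \<otimes> (K2 \<otimes> Q2)"
  proof -
    have "inv u \<otimes> ((inv P1 \<otimes> (K1 \<otimes> Q1)) \<otimes> u) = inv u \<otimes> ((inv P2 \<otimes> (K2 \<otimes> Q2)) \<otimes> u)"
      using bb(2) Fe[of b1] Fe[of b2] unfolding P1_def P2_def Q1_def Q2_def K1_def K2_def by argo
    then have "(inv P1 \<otimes> (K1 \<otimes> Q1)) \<otimes> u = (inv P2 \<otimes> (K2 \<otimes> Q2)) \<otimes> u"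
      using cs uc by simp
    then show ?thesis using cs uc by simp
  qed
  have rP: "r (g0 [^] (a::nat)) = g0 [^] a" for a using rpow hc rh g0c by (simp add: g0_def)
  have rK: "r (k [^] (a::nat)) = \<one>" for a using rpow kc rk by simp
  have "r (inv P1 \<otimes> (K1 \<otimes> Q1)) = inv P1 \<otimes> Q1"
    using cs rm rc rinv rP rK unfolding P1_def Q1_def K1_def by simp
  moreover have "r (inv P2 \<otimes> (K2 \<otimes> Q2)) = inv P2 \<otimes> Q2"
    using cs rm rc rinv rP rK unfolding P2_def Q2_def K2_def by simp
  ultimately have e2: "inv P1 \<otimes> Q1 = inv P2 \<otimes> Q2" using e1 by simp
  have "inv P1 \<otimes> (K1 \<otimes> Q1) = (inv P1 \<otimes> Q1) \<otimes> K1"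
    using cs commk[of "jf b1" b1] by (simp add: m_assoc Q1_def K1_def)
  moreover have "inv P2 \<otimes> (K2 \<otimes> Q2) = (inv P2 \<otimes> Q2) \<otimes> K2"
    using cs commk[of "jf b2" b2] by (simp add: m_assoc Q2_def K2_def)
  ultimately have "(inv P1 \<otimes> Q1) \<otimes> K1 = (inv P1 \<otimes> Q1) \<otimes> K2" using e1 e2 by simp
  then have "K1 = K2" using cs by simp
  then have "k = \<one>" using tf_pow[OF tf kc bb(1)] by (simp add: K1_def K2_def)
  then show False using k1 by simp
qed

end

context hypg begin

lemma final:
  assumes "torsion_free G" and "retract H G"
  shows "malnormal H G"
proof -
  have tf: "\<forall>x\<in>carrier G. \<forall>n::nat. 0 < n \<and> x [^] n = \<one> \<longrightarrow> x = \<one>"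
    using assms(1) unfolding torsion_free_def by blast
  obtain \<phi> where sg: "subgroup H G" and ph: "\<phi> \<in> hom G (G\<lparr>carrier := H\<rparr>)" and fx: "\<And>h. h \<in> H \<Longrightarrow> \<phi> h = h"
    using assms(2) unfolding retract_def by blast
  have Hsub: "H \<subseteq> carrier G" using sg by (rule subgroup.subset)
  have phc: "\<phi> x \<in> H" if "x \<in> carrier G" for x using ph that unfolding hom_def by auto
  have phm: "\<phi> (x \<otimes> y) = \<phi> x \<otimes> \<phi> y" if "x \<in> carrier G" "y \<in> carrier G" for x y
    using ph that unfolding hom_def by auto
  have H1: "\<one> \<in> H" using sg by (rule subgroup.one_closed)
  have Hinv: "inv x \<in> H" if "x \<in> H" for x using sg that by (rule subgroup.m_inv_closed)
  show ?thesis unfolding malnormal_def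
  proof (intro conjI sg ballI)
    fix g assume gH: "g \<in> carrier G - H"
    then have gc: "g \<in> carrier G" and gnH: "g \<notin> H" by auto
    show "H \<inter> {g \<otimes> h \<otimes> inv g |h. h \<in> H} = {\<one>}"
    proof
      show "{\<one>} \<subseteq> H \<inter> {g \<otimes> h \<otimes> inv g |h. h \<in> H}"
        using H1 gc by force
    next
      show "H \<inter> {g \<otimes> h \<otimes> inv g |h. h \<in> H} \<subseteq> {\<one>}"
      proof
        fix y assume "y \<in> H \<inter> {g \<otimes> h \<otimes> inv g |h. h \<in> H}"
        then obtain h where yH: "y \<in> H" and hH: "h \<in> H" and yd: "y = g \<otimes> h \<otimes> inv g" by blast
        have hc: "h \<in> carrier G" using hH Hsub by auto
        show "y \<in> {\<one>}"
        proof (rule ccontr)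
          assume "y \<notin> {\<one>}"
          then have y1: "y \<noteq> \<one>" by simp
          have h1: "h \<noteq> \<one>" using y1 yd gc by auto
          define P where "P = \<phi> g"
          have PH: "P \<in> H" using phc gc by (simp add: P_def)
          have Pc: "P \<in> carrier G" using PH Hsub by auto
          have "\<phi> (inv g) \<otimes> P = \<phi> (inv g \<otimes> g)" using phm[of "inv g" g] gc by (simp add: P_def)
          also have "\<dots> = \<one>" using gc fx H1 by simp
          finally have pinv: "\<phi> (inv g) = inv P"
            using phc[of "inv g"] gc Pc Hsub by (simp add: inv_equality subset_iff)
          have "\<phi> y = P \<otimes> h \<otimes> inv P" using yd phm gc hc fx hH pinv by (simp add: P_def)
          then have A: "g \<otimes> h \<otimes> inv g = P \<otimes> h \<otimes> inv P" using fx yH yd by simp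
          define k0 where "k0 = inv P \<otimes> g"
          have k0c: "k0 \<in> carrier G" using Pc gc by (simp add: k0_def)
          have "inv P \<otimes> (g \<otimes> h \<otimes> inv g) \<otimes> g = inv P \<otimes> (P \<otimes> h \<otimes> inv P) \<otimes> g" using A by simp
          then have comm: "h \<otimes> k0 = k0 \<otimes> h" using Pc gc hc by (simp add: k0_def m_assoc)
          have rk: "\<phi> k0 = \<one>" using phm Pc gc fx Hinv PH by (simp add: k0_def P_def)
          have k1: "k0 \<noteq> \<one>"
          proof
            assume "k0 = \<one>"
            then have "P \<otimes> (inv P \<otimes> g) = P" using Pc by (simp add: k0_def)
            then have "g = P" using Pc gc by (simp add: m_assoc[symmetric])
            then show False using gnH PH by simp
          qed
          show False
            using main_contra[OF hc k0c comm h1 k1 tf, of \<phi>] phc Hsub phm fx hH rk by blast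
        qed
      qed
    qed
  qed
qed


end

theorem lemma5p3:
  fixes G :: "('a, 'b) monoid_scheme" and H :: "'a set"
  assumes "hyperbolic_group G" and "torsion_free G" and "retract H G"
  shows "malnormal H G"
proof -
  obtain S \<delta> where gG: "group G" and fin: "finite S" and sub: "S \<subseteq> carrier G"
    and gen: "generate G S = carrier G"
    and four0: "\<forall>w\<in>carrier G. \<forall>x\<in>carrier G. \<forall>y\<in>carrier G. \<forall>z\<in>carrier G.
          gromov_product G S w x z \<ge> min (gromov_product G S w x y) (gromov_product G S w y z) - \<delta>"
    using assms(1) unfolding hyperbolic_group_def by blast
  have fourM: "gromov_product G S w x z \<ge> min (gromov_product G S w x y) (gromov_product G S w y z) - max \<delta> 0"
    if "w \<in> carrier G" "x \<in> carrier G" "y \<in> carrier G" "z \<in> carrier G" for w x y z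
  proof -
    have "gromov_product G S w x z \<ge> min (gromov_product G S w x y) (gromov_product G S w y z) - \<delta>"
      using four0 that by blast
    moreover have "\<delta> \<le> max \<delta> 0" by simp
    ultimately show ?thesis by linarith
  qed
  have "hypg G S (max \<delta> 0)"
    unfolding hypg_def hypg_axioms_def using gG fin sub gen fourM by auto
  then show ?thesis using hypg.final assms(2,3) by blast
qed

end
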